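(* Let $K$ be a fan-like sphere with vertex set $[m]$ and $\Sigma$ a complete fan over $K$ with $m$ 1-cones. Choose a nonzero point $x_i$ on each 1-cone corresponding to $i\in[m]$ and let $\widehat X=(\widehat x_1,\dots,\widehat x_m)$ be a Shephard diagram for $\Sigma$ with respect to $X=(x_1,\dots,x_m)$. Then for any $i\in[m]$, the subsequence $\widehat X\setminus(\widehat x_i)$ is a Shephard diagram for $\operatorname{proj}_i\Sigma$ (with respect to the images in $\mathbb{R}^n/\operatorname{span}\{x_i\}$ of the points $x_j$, $j\ne i$).
   Context: A fan-like sphere is a simplicial $(n-1)$-sphere underlying a complete simplicial fan in $\mathbb{R}^n$. For a vertex $i$, $\operatorname{proj}_i\Sigma$ is the fan in $\mathbb{R}^n/\operatorname{span}\{x_i\}$ formed by the images of the cones of $\Sigma$ containing $x_i$; its underlying complex is $\operatorname{link}_K\{i\}$ (images of $x_j$ with $j$ not in the link may be present as extra points). Linear transform: for a sequence $X=(x_1,\dots,x_m)$ spanning $\mathbb{R}^n$, write a basis of $\{\alpha\in\mathbb{R}^m:\sum\alpha_jx_j=0\}$ as rows of an $(m-n)\times m$ matrix; its columns $\overline x_j$ form a linear transform. If $X$ positively spans $\mathbb{R}^n$, $\operatorname{pos}\overline X$ is strongly convex; choose a hyperplane $H$ not through $0$ meeting each ray $\{a\overline x_j:a>0\}$ at $\widehat x_j$; $(\widehat x_1,\dots,\widehat x_m)$ is a Shephard diagram of $X$ (a Shephard diagram for $\Sigma$ when the $x_j$ lie on the 1-cones of $\Sigma$). *)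

theory Defs
  imports "HOL-Analysis.Analysis"
begin

definition simplicial_complex :: "nat set \<Rightarrow> nat set set \<Rightarrow> bool" where
  "simplicial_complex V K \<longleftrightarrow> finite V \<and> {} \<in> K \<and> (\<forall>\<sigma>\<in>K. \<sigma> \<subseteq> V)
     \<and> (\<forall>\<sigma>\<in>K. \<forall>\<tau>. \<tau> \<subseteq> \<sigma> \<longrightarrow> \<tau> \<in> K) \<and> (\<forall>v\<in>V. {v} \<in> K)"

definition pos_hull :: "(nat \<Rightarrow> 'v::real_vector) \<Rightarrow> nat set \<Rightarrow> 'v set" where
  "pos_hull x S = {\<Sum>j\<in>S. \<mu> j *\<^sub>R x j | \<mu>. \<forall>j\<in>S. \<mu> j \<ge> 0}"

text \<open>The cones pos{x_j : j in sigma}, sigma in K, form a complete simplicial fan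
  in the ambient space; x_j is a nonzero point on the 1-cone of vertex j.\<close>
definition complete_simplicial_fan ::
    "nat set \<Rightarrow> nat set set \<Rightarrow> (nat \<Rightarrow> 'v::euclidean_space) \<Rightarrow> bool" where
  "complete_simplicial_fan V K x \<longleftrightarrow> simplicial_complex V K
     \<and> (\<forall>\<sigma>\<in>K. inj_on x \<sigma> \<and> independent (x ` \<sigma>))
     \<and> (\<forall>\<sigma>\<in>K. \<forall>\<tau>\<in>K. pos_hull x \<sigma> \<inter> pos_hull x \<tau> = pos_hull x (\<sigma> \<inter> \<tau>))
     \<and> (\<Union>\<sigma>\<in>K. pos_hull x \<sigma>) = UNIV"

definition positively_spans :: "nat set \<Rightarrow> (nat \<Rightarrow> 'v::real_vector) \<Rightarrow> bool" where
  "positively_spans I X \<longleftrightarrow> pos_hull X I = UNIV"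

text \<open>Linear transform: the functions j \<mapsto> Xbar j $ k (k ranging over the index type 'd),
  restricted to I, are the rows of a matrix whose rows form a basis of the space of linear
  dependences {alpha. sum_j alpha_j X_j = 0}; the columns Xbar j form the linear transform.\<close>
definition linear_transform ::
    "nat set \<Rightarrow> (nat \<Rightarrow> 'v::real_vector) \<Rightarrow> (nat \<Rightarrow> real^'d) \<Rightarrow> bool" where
  "linear_transform I X Xbar \<longleftrightarrow>
     (\<forall>k. (\<Sum>j\<in>I. (Xbar j $ k) *\<^sub>R X j) = 0)
     \<and> (\<forall>\<alpha>::nat \<Rightarrow> real. (\<Sum>j\<in>I. \<alpha> j *\<^sub>R X j) = 0 \<longrightarrow>
          (\<exists>!c::real^'d. \<forall>j\<in>I. \<alpha> j = (\<Sum>k\<in>UNIV. c $ k * Xbar j $ k)))"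

definition shephard_diagram ::
    "nat set \<Rightarrow> (nat \<Rightarrow> 'v::real_vector) \<Rightarrow> (nat \<Rightarrow> real^'d) \<Rightarrow> bool" where
  "shephard_diagram I X Xhat \<longleftrightarrow> span (X ` I) = UNIV \<and> positively_spans I X \<and>
     (\<exists>Xbar. linear_transform I X Xbar \<and>
        (\<exists>a c. c \<noteq> 0 \<and> (\<forall>j\<in>I. a \<bullet> Xhat j = c \<and> (\<exists>t>0. Xhat j = t *\<^sub>R Xbar j))))"

end

theory Submission
  imports Defs
begin

theorem proposition5p10:
  fixes m :: nat and K :: "nat set set"
    and x :: "nat \<Rightarrow> real^'n"
    and Xhat :: "nat \<Rightarrow> real^'d"
    and i :: nat
    and \<pi> :: "real^'n \<Rightarrow> 'b::euclidean_space"
  assumes fan: "complete_simplicial_fan {1..m} K x"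
    and shep: "shephard_diagram {1..m} x Xhat"
    and i: "i \<in> {1..m}"
    and quot: "linear \<pi>" "surj \<pi>" "\<And>v. \<pi> v = 0 \<longleftrightarrow> v \<in> span {x i}"
  shows "shephard_diagram ({1..m} - {i}) (\<lambda>j. \<pi> (x j)) Xhat"
proof -
  define I where "I = {1..m}"
  define I' where "I' = I - {i}"
  have finI: "finite I" and iI: "i \<in> I" using i by (auto simp: I_def)
  have finI': "finite I'" using finI by (simp add: I'_def)
  have pix: "\<pi> (x i) = 0" using quot(3) by (simp add: span_base)
  have xi0: "x i \<noteq> 0"
  proof -
    have "{i} \<in> K" using fan iI unfolding complete_simplicial_fan_def simplicial_complex_def I_def
      by blast
    then have "independent (x ` {i})" using fan unfolding complete_simplicial_fan_def by blast
    then show ?thesis using dependent_zero by force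
  qed
  have split: "(\<Sum>j\<in>I. f j) = f i + (\<Sum>j\<in>I'. f j)" for f :: "nat \<Rightarrow> 'z::comm_monoid_add"
    using sum.remove[OF finI iI] by (simp add: I'_def)
  have pisum: "\<pi> (\<Sum>j\<in>I. g j *\<^sub>R x j) = (\<Sum>j\<in>I'. g j *\<^sub>R \<pi> (x j))" for g
    using split[of "\<lambda>j. g j *\<^sub>R \<pi> (x j)"] pix
    by (simp add: linear_sum[OF quot(1)] linear_scale[OF quot(1)])
  from shep obtain Xbar a c where sp: "span (x ` I) = UNIV" and ps: "positively_spans I x"
    and lt: "linear_transform I x Xbar" and c: "c \<noteq> 0"
    and hyp: "\<forall>j\<in>I. a \<bullet> Xhat j = c \<and> (\<exists>t>0. Xhat j = t *\<^sub>R Xbar j)"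
    unfolding shephard_diagram_def I_def by blast
  have posrep: "\<exists>\<mu>. (\<forall>j\<in>I'. \<mu> j \<ge> 0) \<and> v = (\<Sum>j\<in>I'. \<mu> j *\<^sub>R \<pi> (x j))" for v
  proof -
    obtain u where u: "v = \<pi> u" using quot(2) by (metis surj_def)
    have "u \<in> pos_hull x I" using ps by (simp add: positively_spans_def)
    then obtain \<mu> where mu: "\<forall>j\<in>I. \<mu> j \<ge> 0" "u = (\<Sum>j\<in>I. \<mu> j *\<^sub>R x j)"
      unfolding pos_hull_def by blast
    show ?thesis using mu pisum[of \<mu>] u by (auto simp: I'_def)
  qed
  have A: "span ((\<lambda>j. \<pi> (x j)) ` I') = UNIV"
  proof -
    { fix v
      obtain \<mu> where "v = (\<Sum>j\<in>I'. \<mu> j *\<^sub>R \<pi> (x j))" using posrep by blast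
      then have "v \<in> span ((\<lambda>j. \<pi> (x j)) ` I')"
        by (simp add: span_sum span_scale span_base imageI) }
    then show ?thesis by blast
  qed
  have B: "positively_spans I' (\<lambda>j. \<pi> (x j))"
    unfolding positively_spans_def pos_hull_def using posrep by blast
  have lt1: "\<forall>k. (\<Sum>j\<in>I. (Xbar j $ k) *\<^sub>R x j) = 0" and
    lt2: "\<And>\<alpha>. (\<Sum>j\<in>I. \<alpha> j *\<^sub>R x j) = 0 \<Longrightarrow>
          (\<exists>!c::real^'d. \<forall>j\<in>I. \<alpha> j = (\<Sum>k\<in>UNIV. c $ k * Xbar j $ k))"
    using lt unfolding linear_transform_def by blast+
  have C: "linear_transform I' (\<lambda>j. \<pi> (x j)) Xbar"
    unfolding linear_transform_def
  proof (intro conjI allI impI)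
    fix k
    show "(\<Sum>j\<in>I'. (Xbar j $ k) *\<^sub>R \<pi> (x j)) = 0"
      using pisum[of "\<lambda>j. Xbar j $ k"] lt1 linear_0[OF quot(1)] by simp
  next
    fix \<alpha> :: "nat \<Rightarrow> real"
    assume h: "(\<Sum>j\<in>I'. \<alpha> j *\<^sub>R \<pi> (x j)) = 0"
    have "\<pi> (\<Sum>j\<in>I'. \<alpha> j *\<^sub>R x j) = 0" using h
      by (simp add: linear_sum[OF quot(1)] linear_scale[OF quot(1)])
    then have "(\<Sum>j\<in>I'. \<alpha> j *\<^sub>R x j) \<in> span {x i}" using quot(3) by blast
    then obtain t where t: "(\<Sum>j\<in>I'. \<alpha> j *\<^sub>R x j) = t *\<^sub>R x i"
      by (auto simp: span_singleton)
    define \<alpha>' where "\<alpha>' = \<alpha>(i := - t)"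
    have eqI': "\<forall>j\<in>I'. \<alpha>' j = \<alpha> j" by (auto simp: \<alpha>'_def I'_def)
    have "(\<Sum>j\<in>I'. \<alpha>' j *\<^sub>R x j) = (\<Sum>j\<in>I'. \<alpha> j *\<^sub>R x j)"
      using eqI' by (intro sum.cong) auto
    then have "(\<Sum>j\<in>I. \<alpha>' j *\<^sub>R x j) = 0"
      using split[of "\<lambda>j. \<alpha>' j *\<^sub>R x j"] t by (simp add: \<alpha>'_def)
    then obtain c0 where c0: "\<forall>j\<in>I. \<alpha>' j = (\<Sum>k\<in>UNIV. c0 $ k * Xbar j $ k)"
      using lt2 by blast
    show "\<exists>!c::real^'d. \<forall>j\<in>I'. \<alpha> j = (\<Sum>k\<in>UNIV. c $ k * Xbar j $ k)"
    proof (rule ex1I)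
      show "\<forall>j\<in>I'. \<alpha> j = (\<Sum>k\<in>UNIV. c0 $ k * Xbar j $ k)"
        using c0 eqI' by (auto simp: I'_def)
    next
      have uniq: "c1 = c2" if h1: "\<forall>j\<in>I'. \<alpha> j = (\<Sum>k\<in>UNIV. c1 $ k * Xbar j $ k)"
        and h2: "\<forall>j\<in>I'. \<alpha> j = (\<Sum>k\<in>UNIV. c2 $ k * Xbar j $ k)" for c1 c2 :: "real^'d"
      proof -
        define d where "d = c1 - c2"
        define \<gamma> where "\<gamma> j = (\<Sum>k\<in>UNIV. d $ k * Xbar j $ k)" for j
        have g0: "\<gamma> j = 0" if "j \<in> I'" for j
        proof -
          have "\<gamma> j = (\<Sum>k\<in>UNIV. c1 $ k * Xbar j $ k) - (\<Sum>k\<in>UNIV. c2 $ k * Xbar j $ k)"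
            by (simp add: \<gamma>_def d_def sum_subtractf left_diff_distrib)
          then show ?thesis using h1 h2 that by simp
        qed
        have "(\<Sum>j\<in>I. \<gamma> j *\<^sub>R x j) = (\<Sum>j\<in>I. \<Sum>k\<in>UNIV. (d $ k * Xbar j $ k) *\<^sub>R x j)"
          by (simp add: \<gamma>_def scaleR_sum_left)
        also have "\<dots> = (\<Sum>k\<in>UNIV. d $ k *\<^sub>R (\<Sum>j\<in>I. (Xbar j $ k) *\<^sub>R x j))"
          by (subst sum.swap) (simp add: scaleR_sum_right)
        also have "\<dots> = 0" using lt1 by simp
        finally have gs: "(\<Sum>j\<in>I. \<gamma> j *\<^sub>R x j) = 0" .
        have "(\<Sum>j\<in>I'. \<gamma> j *\<^sub>R x j) = 0" using g0 by simp
        then have "\<gamma> i *\<^sub>R x i = 0" using gs split[of "\<lambda>j. \<gamma> j *\<^sub>R x j"] by simp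
        then have gi: "\<gamma> i = 0" using xi0 by simp
        have gall: "\<forall>j\<in>I. \<gamma> j = 0" using g0 gi by (auto simp: I'_def)
        obtain e where "\<forall>e'. (\<forall>j\<in>I. \<gamma> j = (\<Sum>k\<in>UNIV. e' $ k * Xbar j $ k)) \<longrightarrow> e' = e"
          using lt2[OF gs] by blast
        moreover have "\<forall>j\<in>I. \<gamma> j = (\<Sum>k\<in>UNIV. d $ k * Xbar j $ k)" by (simp add: \<gamma>_def)
        moreover have "\<forall>j\<in>I. \<gamma> j = (\<Sum>k\<in>UNIV. (0::real^'d) $ k * Xbar j $ k)" using gall by simp
        ultimately have "d = 0" by metis
        then show ?thesis by (simp add: d_def)
      qed
      fix c'
      assume "\<forall>j\<in>I'. \<alpha> j = (\<Sum>k\<in>UNIV. c' $ k * Xbar j $ k)"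
      then show "c' = c0" using uniq c0 eqI' by (auto simp: I'_def)
    qed
  qed
  have D: "\<forall>j\<in>I'. a \<bullet> Xhat j = c \<and> (\<exists>t>0. Xhat j = t *\<^sub>R Xbar j)"
    using hyp by (auto simp: I'_def)
  show ?thesis unfolding shephard_diagram_def
    using A B C D c by (auto simp: I'_def I_def)
qed

end
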